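(* Let $g^{ij}(u)=\sum_{s,k}\frac{1-\delta^{sk}}{p_sp_k}\frac{\partial u_i}{\partial p_s}\frac{\partial u_j}{\partial p_k}$, viewed as a polynomial in $u_1,\dots,u_n$. The Lie derivative of this intersection form with respect to the vector field $\frac{\partial}{\partial u_{n-1}}$ is given by $$\eta^{ij}(u)=\frac{\partial g^{ij}}{\partial u_{n-1}}(u)=4(2n-i-j)\,u_{i+j-n-1},\qquad i,j=1,\dots,n.$$ Hence $\eta^{ij}(u)$ is a non-degenerate Hankel matrix with all entries above the anti-diagonal vanishing; in particular the anti-diagonal entries are $\eta^{i,n-i+1}(u)=4(n-1)$.
   Context: $n\ge2$. $u_k=\sum_{1\le i_1<\dots<i_k\le n}p_{i_1}^2\cdots p_{i_k}^2$ for $k=1,\dots,n$; conventions $u_0=1$ and $u_k=0$ for $k<0$ and $k>n$. "Above the anti-diagonal" means entries with $i+j<n+1$. *)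

theory Defs
  imports Complex_Main "Jordan_Normal_Form.Determinant"
begin

(* u_k = e_k(p_1^2,...,p_n^2); automatically u_0 = 1 and u_k = 0 for k > n *)
definition usym :: "nat \<Rightarrow> (nat \<Rightarrow> real) \<Rightarrow> nat \<Rightarrow> real" where
  "usym n p k = (\<Sum>S | S \<subseteq> {1..n} \<and> card S = k. \<Prod>i\<in>S. (p i)^2)"

definition dudp :: "nat \<Rightarrow> nat \<Rightarrow> nat \<Rightarrow> (nat \<Rightarrow> real) \<Rightarrow> real" where
  "dudp n i s p = (THE D. ((\<lambda>t. usym n (p(s := t)) i) has_real_derivative D) (at (p s)))"

definition gform :: "nat \<Rightarrow> nat \<Rightarrow> nat \<Rightarrow> (nat \<Rightarrow> real) \<Rightarrow> real" where
  "gform n i j p = (\<Sum>s\<in>{1..n}. \<Sum>k\<in>{1..n}.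
      (if s = k then 0 else 1) / (p s * p k) * dudp n i s p * dudp n j k p)"

inductive mpoly_fun :: "nat \<Rightarrow> ((nat \<Rightarrow> real) \<Rightarrow> real) \<Rightarrow> bool" for n where
  const: "mpoly_fun n (\<lambda>u. c)"
| var: "1 \<le> k \<Longrightarrow> k \<le> n \<Longrightarrow> mpoly_fun n (\<lambda>u. u k)"
| add: "mpoly_fun n f \<Longrightarrow> mpoly_fun n g \<Longrightarrow> mpoly_fun n (\<lambda>u. f u + g u)"
| mult: "mpoly_fun n f \<Longrightarrow> mpoly_fun n g \<Longrightarrow> mpoly_fun n (\<lambda>u. f u * g u)"

definition ucv :: "nat \<Rightarrow> (nat \<Rightarrow> real) \<Rightarrow> int \<Rightarrow> real" where
  "ucv n u k = (if k = 0 then 1 else if 1 \<le> k \<and> k \<le> int n then u (nat k) else 0)"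

definition eta :: "nat \<Rightarrow> (nat \<Rightarrow> real) \<Rightarrow> nat \<Rightarrow> nat \<Rightarrow> real" where
  "eta n u i j = 4 * (2 * real n - real i - real j) * ucv n u (int i + int j - int n - 1)"

end

theory Submission imports Defs "HOL-Computational_Algebra.Polynomial" begin

definition esym :: "nat set \<Rightarrow> (nat \<Rightarrow> real) \<Rightarrow> nat \<Rightarrow> real" where
  "esym X x k = (\<Sum>S | S \<subseteq> X \<and> card S = k. \<Prod>i\<in>S. x i)"

lemma usym_esym: "usym n p k = esym {1..n} (\<lambda>i. (p i)^2) k"
  by (simp add: usym_def esym_def)

lemma esym_cong: "(\<And>i. i \<in> X \<Longrightarrow> x i = y i) \<Longrightarrow> esym X x k = esym X y k"
  unfolding esym_def
  by (intro sum.cong refl prod.cong) auto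

lemma esym_0: "finite X \<Longrightarrow> esym X x 0 = 1"
proof -
  assume f: "finite X"
  have "{S. S \<subseteq> X \<and> card S = 0} = {{}}"
    using f by (auto dest: finite_subset)
  then show ?thesis by (simp add: esym_def)
qed

lemma esym_big: "finite X \<Longrightarrow> card X < k \<Longrightarrow> esym X x k = 0"
proof -
  assume f: "finite X" and c: "card X < k"
  have e: "{S. S \<subseteq> X \<and> card S = k} = {}"
  proof (intro equalityI subsetI)
    fix S assume "S \<in> {S. S \<subseteq> X \<and> card S = k}"
    then have "S \<subseteq> X" "card S = k" by auto
    then have "k \<le> card X" using card_mono[OF f] by metis
    then show "S \<in> {}" using c by simp
  qed simp
  show ?thesis unfolding esym_def e by simp
qed

lemma esym_insert:
  assumes f: "finite X" and s: "s \<notin> X"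
  shows "esym (insert s X) x (Suc k) = esym X x (Suc k) + x s * esym X x k"
proof -
  let ?A = "{S. S \<subseteq> X \<and> card S = Suc k}"
  let ?T = "{T. T \<subseteq> X \<and> card T = k}"
  let ?B = "insert s ` ?T"
  have fin: "finite ?A" "finite ?T"
    using f by (auto intro: finite_subset[of _ "Pow X"])
  have eq: "{S. S \<subseteq> insert s X \<and> card S = Suc k} = ?A \<union> ?B"
  proof (intro equalityI subsetI)
    fix S assume S: "S \<in> {S. S \<subseteq> insert s X \<and> card S = Suc k}"
    show "S \<in> ?A \<union> ?B"
    proof (cases "s \<in> S")
      case True
      have SS: "S \<subseteq> insert s X" "card S = Suc k" using S by auto
      have finS: "finite S" using SS(1) f by (meson finite_insert finite_subset)
      have "card (S - {s}) = k" using finS SS(2) True by simp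
      moreover have "S - {s} \<subseteq> X" using SS(1) by auto
      ultimately have "S - {s} \<in> ?T" by simp
      moreover have "S = insert s (S - {s})" using True by auto
      ultimately show ?thesis by blast
    next
      case False
      then show ?thesis using S by auto
    qed
  next
    fix S assume "S \<in> ?A \<union> ?B"
    then show "S \<in> {S. S \<subseteq> insert s X \<and> card S = Suc k}"
    proof
      assume "S \<in> ?A" then show ?thesis by auto
    next
      assume "S \<in> ?B"
      then obtain T where T: "T \<subseteq> X" "card T = k" "S = insert s T" by auto
      have "finite T" using T f finite_subset by auto
      moreover have "s \<notin> T" using T s by auto
      ultimately show ?thesis using T by auto
    qed
  qed
  have disj: "?A \<inter> ?B = {}" using s by auto
  have inj: "inj_on (insert s) ?T"
  proof (rule inj_onI)
    fix A B assume A: "A \<in> ?T" and B: "B \<in> ?T" and AB: "insert s A = insert s B"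
    have "s \<notin> A" "s \<notin> B" using A B s by auto
    then show "A = B" using AB insert_ident by metis
  qed
  have "esym (insert s X) x (Suc k) = (\<Sum>S\<in>?A. \<Prod>i\<in>S. x i) + (\<Sum>S\<in>?B. \<Prod>i\<in>S. x i)"
    unfolding esym_def eq using fin disj by (intro sum.union_disjoint) auto
  also have "(\<Sum>S\<in>?B. \<Prod>i\<in>S. x i) = (\<Sum>T\<in>?T. \<Prod>i\<in>insert s T. x i)"
    using inj by (simp add: sum.reindex)
  also have "\<dots> = (\<Sum>T\<in>?T. x s * (\<Prod>i\<in>T. x i))"
  proof (intro sum.cong refl)
    fix T assume "T \<in> ?T"
    then have "finite T" "s \<notin> T" using f s finite_subset by auto
    then show "(\<Prod>i\<in>insert s T. x i) = x s * (\<Prod>i\<in>T. x i)" by simp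
  qed
  finally show ?thesis by (simp add: esym_def sum_distrib_left)
qed

lemma esym_remove:
  assumes f: "finite X" and s: "s \<in> X"
  shows "esym X x (Suc k) = esym (X - {s}) x (Suc k) + x s * esym (X - {s}) x k"
proof -
  have "X = insert s (X - {s})" using s by auto
  then show ?thesis using esym_insert[of "X - {s}" s x k] f by (metis finite_Diff Diff_iff singletonI)
qed

lemma esym_sum_remove:
  assumes f: "finite X"
  shows "(\<Sum>s\<in>X. esym (X - {s}) x k) = (real (card X) - real k) * esym X x k"
proof (cases "k \<le> card X")
  case False
  have "\<And>s. esym (X - {s}) x k = 0"
    using f False by (intro esym_big) (auto, meson card_Diff1_le le_less_trans not_le f)
  then show ?thesis using esym_big[OF f, of k x] False by simp
next
  case True
  let ?S = "{S. S \<subseteq> X \<and> card S = k}"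
  have finS: "finite ?S" using f by (auto intro: finite_subset[of _ "Pow X"])
  have "\<And>s. esym (X - {s}) x k = (\<Sum>S\<in>?S. if s \<notin> S then (\<Prod>i\<in>S. x i) else 0)"
  proof -
    fix s
    have "esym (X - {s}) x k = sum (\<lambda>S. \<Prod>i\<in>S. x i) {S\<in>?S. s \<notin> S}"
      unfolding esym_def by (rule sum.cong) auto
    also have "\<dots> = (\<Sum>S\<in>?S. if s \<notin> S then (\<Prod>i\<in>S. x i) else 0)"
      by (rule sum.inter_filter[OF finS])
    finally show "esym (X - {s}) x k = (\<Sum>S\<in>?S. if s \<notin> S then (\<Prod>i\<in>S. x i) else 0)" .
  qed
  then have "(\<Sum>s\<in>X. esym (X - {s}) x k) = (\<Sum>S\<in>?S. \<Sum>s\<in>X. if s \<notin> S then (\<Prod>i\<in>S. x i) else 0)"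
    by (simp add: sum.swap[of _ X])
  also have "\<dots> = (\<Sum>S\<in>?S. (real (card X) - real k) * (\<Prod>i\<in>S. x i))"
  proof (intro sum.cong refl)
    fix S assume S: "S \<in> ?S"
    have "(\<Sum>s\<in>X. if s \<notin> S then (\<Prod>i\<in>S. x i) else 0) = (\<Sum>s\<in>{s\<in>X. s \<notin> S}. (\<Prod>i\<in>S. x i))"
      by (rule sum.inter_filter[OF f, symmetric])
    also have "{s\<in>X. s \<notin> S} = X - S" by auto
    also have "(\<Sum>s\<in>X - S. (\<Prod>i\<in>S. x i)) = real (card (X - S)) * (\<Prod>i\<in>S. x i)" by simp
    also have "card (X - S) = card X - k" using S f by (auto simp: card_Diff_subset finite_subset)
    finally show "(\<Sum>s\<in>X. if s \<notin> S then (\<Prod>i\<in>S. x i) else 0) = (real (card X) - real k) * (\<Prod>i\<in>S. x i)"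
      using True by (simp add: of_nat_diff)
  qed
  finally show ?thesis by (simp add: esym_def sum_distrib_left)
qed


lemma usym_0: "usym n p 0 = 1"
  by (simp add: usym_esym esym_0)

lemma usym_big: "n < k \<Longrightarrow> usym n p k = 0"
  by (simp add: usym_esym esym_big)

definition uu :: "nat \<Rightarrow> (nat \<Rightarrow> real) \<Rightarrow> nat \<Rightarrow> real" where
  "uu n u k = (if k = 0 then 1 else if k \<le> n then u k else 0)"

lemma uu_usym: "uu n (usym n p) k = usym n p k"
  by (simp add: uu_def usym_0 usym_big)

fun HH :: "nat \<Rightarrow> (nat \<Rightarrow> real) \<Rightarrow> nat \<Rightarrow> nat \<Rightarrow> real" where
  "HH n u a 0 = (real n - real a) * uu n u a"
| "HH n u a (Suc b) = HH n u (Suc a) b + (real n - real a) * uu n u a * uu n u (Suc b)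
      - (real n - real b) * uu n u b * uu n u (Suc a)"

definition G0 :: "nat \<Rightarrow> nat \<Rightarrow> nat \<Rightarrow> (nat \<Rightarrow> real) \<Rightarrow> real" where
  "G0 n i j u = 4 * ((real n - real (i - 1)) * (real n - real (j - 1)) * uu n u (i - 1) * uu n u (j - 1)
      - HH n u (i - 1) (j - 1))"

lemma mp_diff: "mpoly_fun n f \<Longrightarrow> mpoly_fun n g \<Longrightarrow> mpoly_fun n (\<lambda>u. f u - g u)"
proof -
  assume f: "mpoly_fun n f" and g: "mpoly_fun n g"
  have "mpoly_fun n (\<lambda>u. f u + (\<lambda>u. (\<lambda>u. -1) u * g u) u)"
    by (intro mpoly_fun.add f mpoly_fun.mult g mpoly_fun.const)
  then show ?thesis by simp
qed

lemma mp_cmult: "mpoly_fun n f \<Longrightarrow> mpoly_fun n (\<lambda>u. c * f u)"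
proof -
  assume f: "mpoly_fun n f"
  have "mpoly_fun n (\<lambda>u. (\<lambda>u. c) u * f u)"
    by (intro mpoly_fun.mult f mpoly_fun.const)
  then show ?thesis by simp
qed

lemma mp_uu: "mpoly_fun n (\<lambda>u. uu n u k)"
proof -
  have e: "(\<lambda>u. uu n u k) = (if k = 0 then (\<lambda>u. 1) else if k \<le> n then (\<lambda>u. u k) else (\<lambda>u. 0))"
    by (auto simp: uu_def)
  show ?thesis unfolding e
    by (auto intro: mpoly_fun.const mpoly_fun.var)
qed

lemma mp_HH: "mpoly_fun n (\<lambda>u. HH n u a b)"
proof (induction b arbitrary: a)
  case 0
  then show ?case by (simp add: mp_cmult mp_uu)
next
  case (Suc b)
  have "mpoly_fun n (\<lambda>u. HH n u (Suc a) b + (real n - real a) * uu n u a * uu n u (Suc b)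
      - (real n - real b) * uu n u b * uu n u (Suc a))"
    apply (intro mp_diff mpoly_fun.add mpoly_fun.mult Suc.IH mp_uu mpoly_fun.const)
    done
  then show ?case by simp
qed

lemma mp_G0: "mpoly_fun n (G0 n i j)"
proof -
  have "mpoly_fun n (\<lambda>u. 4 * ((real n - real (i - 1)) * (real n - real (j - 1)) * uu n u (i - 1) * uu n u (j - 1)
      - HH n u (i - 1) (j - 1)))"
    by (intro mp_cmult mp_diff mpoly_fun.mult mp_uu mp_HH mpoly_fun.const)
  then show ?thesis unfolding G0_def[abs_def] .
qed

lemma dudp_eq:
  assumes s: "s \<in> {1..n}"
  shows "dudp n (Suc a) s p = 2 * p s * esym ({1..n} - {s}) (\<lambda>i. (p i)^2) a"
proof -
  let ?N = "{1..n::nat}"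
  let ?x = "\<lambda>i. (p i)^2"
  let ?C = "esym (?N - {s}) ?x (Suc a)"
  let ?D = "esym (?N - {s}) ?x a"
  have eq: "usym n (p(s := t)) (Suc a) = ?C + t^2 * ?D" for t
  proof -
    have "usym n (p(s := t)) (Suc a) = esym ?N (\<lambda>i. ((p(s:=t)) i)^2) (Suc a)"
      by (simp add: usym_esym)
    also have "\<dots> = esym (?N - {s}) (\<lambda>i. ((p(s:=t)) i)^2) (Suc a) + t^2 * esym (?N - {s}) (\<lambda>i. ((p(s:=t)) i)^2) a"
      using esym_remove[of ?N s "\<lambda>i. ((p(s:=t)) i)^2" a] s by simp
    also have "esym (?N - {s}) (\<lambda>i. ((p(s:=t)) i)^2) (Suc a) = ?C"
      by (rule esym_cong) auto
    also have "esym (?N - {s}) (\<lambda>i. ((p(s:=t)) i)^2) a = ?D"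
      by (rule esym_cong) auto
    finally show ?thesis .
  qed
  have d: "((\<lambda>t. ?C + t^2 * ?D) has_real_derivative 2 * p s * ?D) (at (p s))"
    by (auto intro!: derivative_eq_intros)
  have "((\<lambda>t. usym n (p(s := t)) (Suc a)) has_real_derivative 2 * p s * ?D) (at (p s))"
    unfolding eq by (rule d)
  then show ?thesis
    unfolding dudp_def by (intro the_equality) (auto intro: DERIV_unique)
qed

definition HS :: "nat set \<Rightarrow> (nat \<Rightarrow> real) \<Rightarrow> nat \<Rightarrow> nat \<Rightarrow> real" where
  "HS X x a b = (\<Sum>s\<in>X. esym (X - {s}) x a * esym (X - {s}) x b)"

lemma HS_0: "finite X \<Longrightarrow> HS X x a 0 = (real (card X) - real a) * esym X x a"
  by (simp add: HS_def esym_0 esym_sum_remove)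

lemma HS_Suc:
  assumes f: "finite X"
  shows "HS X x a (Suc b) = HS X x (Suc a) b
     + (real (card X) - real a) * esym X x a * esym X x (Suc b)
     - (real (card X) - real b) * esym X x b * esym X x (Suc a)"
proof -
  have per: "esym (X - {s}) x a * esym (X - {s}) x (Suc b) =
     esym (X - {s}) x (Suc a) * esym (X - {s}) x b
     + esym (X - {s}) x a * esym X x (Suc b) - esym (X - {s}) x b * esym X x (Suc a)"
    if s: "s \<in> X" for s
  proof -
    have 1: "esym X x (Suc b) = esym (X - {s}) x (Suc b) + x s * esym (X - {s}) x b"
      by (rule esym_remove[OF f s])
    have 2: "esym X x (Suc a) = esym (X - {s}) x (Suc a) + x s * esym (X - {s}) x a"
      by (rule esym_remove[OF f s])
    show ?thesis unfolding 1 2 by (simp add: algebra_simps)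
  qed
  have "HS X x a (Suc b) = (\<Sum>s\<in>X. esym (X - {s}) x (Suc a) * esym (X - {s}) x b
     + esym (X - {s}) x a * esym X x (Suc b) - esym (X - {s}) x b * esym X x (Suc a))"
    unfolding HS_def by (rule sum.cong) (auto simp: per)
  also have "\<dots> = HS X x (Suc a) b + (\<Sum>s\<in>X. esym (X - {s}) x a) * esym X x (Suc b)
      - (\<Sum>s\<in>X. esym (X - {s}) x b) * esym X x (Suc a)"
    by (simp add: HS_def sum.distrib sum_subtractf sum_distrib_right)
  finally show ?thesis by (simp add: esym_sum_remove[OF f])
qed

lemma esym_uu: "esym {1..n} (\<lambda>i. (p i)^2) c = uu n (usym n p) c"
  by (simp add: uu_usym usym_esym)

lemma esym_uu': "esym {Suc 0..n} (\<lambda>i. (p i)^2) c = uu n (usym n p) c"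
  using esym_uu[of n p c] by simp

lemma HS_HH: "HS {1..n} (\<lambda>i. (p i)^2) a b = HH n (usym n p) a b"
proof (induction b arbitrary: a)
  case 0
  then show ?case by (simp add: HS_0 esym_uu esym_uu')
next
  case (Suc b)
  then show ?case by (simp add: HS_Suc esym_uu esym_uu')
qed

lemma gform_G0:
  assumes i: "i \<in> {1..n}" and j: "j \<in> {1..n}" and p: "\<forall>s\<in>{1..n}. p s \<noteq> 0"
  shows "gform n i j p = G0 n i j (usym n p)"
proof -
  let ?N = "{1..n::nat}"
  let ?x = "\<lambda>i. (p i)^2"
  obtain a where a: "i = Suc a" using i by (cases i) auto
  obtain b where b: "j = Suc b" using j by (cases j) auto
  define E where "E s c = esym (?N - {s}) ?x c" for s c
  have "gform n i j p = (\<Sum>s\<in>?N. \<Sum>k\<in>?N. (if s = k then 0 else 4 * E s a * E k b))"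
    unfolding gform_def a b
  proof (intro sum.cong refl)
    fix s k assume s: "s \<in> ?N" and k: "k \<in> ?N"
    show "(if s = k then 0 else 1) / (p s * p k) * dudp n (Suc a) s p * dudp n (Suc b) k p =
         (if s = k then 0 else 4 * E s a * E k b)"
      using p s k by (simp add: dudp_eq E_def field_simps)
  qed
  also have "\<dots> = (\<Sum>s\<in>?N. (\<Sum>k\<in>?N. 4 * E s a * E k b) - 4 * E s a * E s b)"
  proof (intro sum.cong refl)
    fix s assume s: "s \<in> ?N"
    have "(\<Sum>k\<in>?N. (if s = k then 0 else 4 * E s a * E k b)) =
       (\<Sum>k\<in>?N. 4 * E s a * E k b - (if s = k then 4 * E s a * E k b else 0))"
      by (rule sum.cong) auto
    also have "\<dots> = (\<Sum>k\<in>?N. 4 * E s a * E k b) - 4 * E s a * E s b"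
      using s by (simp add: sum_subtractf)
    finally show "(\<Sum>k\<in>?N. (if s = k then 0 else 4 * E s a * E k b)) =
       (\<Sum>k\<in>?N. 4 * E s a * E k b) - 4 * E s a * E s b" .
  qed
  also have "\<dots> = 4 * ((\<Sum>s\<in>?N. E s a) * (\<Sum>k\<in>?N. E k b)) - 4 * HS ?N ?x a b"
  proof -
    have key: "(\<Sum>s\<in>?N. (\<Sum>k\<in>?N. 4 * E s a * E k b)) = 4 * ((\<Sum>s\<in>?N. E s a) * (\<Sum>k\<in>?N. E k b))"
      unfolding sum_product by (simp add: sum_distrib_left mult.assoc)
    show ?thesis
      unfolding sum_subtractf key[symmetric] by (simp add: HS_def E_def sum_distrib_left mult.assoc)
  qed
  also have "\<dots> = G0 n i j (usym n p)"
  proof -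
    have 1: "(\<Sum>s\<in>?N. E s c) = (real n - real c) * uu n (usym n p) c" for c
      unfolding E_def esym_sum_remove[OF finite_atLeastAtMost] esym_uu by simp
    show ?thesis
      unfolding 1 HS_HH G0_def a b by simp
  qed
  finally show ?thesis .
qed


definition DHc :: "nat \<Rightarrow> (nat \<Rightarrow> real) \<Rightarrow> nat \<Rightarrow> nat \<Rightarrow> real" where
  "DHc m u a b = (if m \<le> a + b then uu (Suc m) u (a + b - m) *
     ((if max a b \<le> m then 1 else 0) - (if m < min a b then 1 else 0)
      + (real m + real m + 1 - real a - real b) *
        ((if m \<le> min a b then 1 else 0) - (if max a b < m then 1 else 0))) else 0)"

lemma DHc_0: "0 < m \<Longrightarrow> DHc m u a 0 = (real m + 1 - real a) * (if a = m then 1 else 0)"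
  by (auto simp: DHc_def uu_def)

lemma DHc_Suc: "0 < m \<Longrightarrow> DHc m u a (Suc b) = DHc m u (Suc a) b
   + (real m + 1 - real a) * ((if a = m then 1 else 0) * uu (Suc m) u (Suc b) + uu (Suc m) u a * (if Suc b = m then 1 else 0))
   - (real m + 1 - real b) * ((if b = m then 1 else 0) * uu (Suc m) u (Suc a) + uu (Suc m) u b * (if Suc a = m then 1 else 0))"
proof -
  assume m: "0 < m"
  define U where "U = uu (Suc m) u (a + Suc b - m)"
  have e1: "(if a = m then 1 else 0) * uu (Suc m) u (Suc b) = (if a = m then U else 0)"
    unfolding U_def by auto
  have e2: "uu (Suc m) u a * (if Suc b = m then 1 else 0) = (if Suc b = m then U else 0)"
    unfolding U_def by auto
  have e3: "(if b = m then 1 else 0) * uu (Suc m) u (Suc a) = (if b = m then U else 0)"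
    unfolding U_def by auto
  have e4: "uu (Suc m) u b * (if Suc a = m then 1 else 0) = (if Suc a = m then U else 0)"
    unfolding U_def by auto
  have e5: "uu (Suc m) u (Suc a + b - m) = U" unfolding U_def by simp
  show ?thesis
    unfolding e1 e2 e3 e4 DHc_def e5 U_def[symmetric]
    using m apply (auto simp: max_def min_def algebra_simps)
    apply (subgoal_tac "real m = real b + 1", simp add: algebra_simps, linarith)
    done
qed


lemma uu_upd: "0 < m \<Longrightarrow> uu (Suc m) (u(m:=t)) k = (if k = m then t else uu (Suc m) u k)"
  by (auto simp: uu_def)

lemma deriv_uu:
  assumes m: "0 < m"
  shows "((\<lambda>t. uu (Suc m) (u(m:=t)) k) has_real_derivative (if k = m then 1 else 0)) (at x)"
  unfolding uu_upd[OF m] by (cases "k = m") (auto intro!: derivative_eq_intros)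

lemma deriv_HH:
  assumes m: "0 < m"
  shows "((\<lambda>t. HH (Suc m) (u(m:=t)) a b) has_real_derivative DHc m u a b) (at (u m))"
proof (induction b arbitrary: a)
  case 0
  have eq: "DHc m u a 0 = (real (Suc m) - real a) * (if a = m then 1 else 0)"
    using DHc_0[OF m, of u a] by simp
  show ?case unfolding HH.simps eq
    by (intro DERIV_cmult deriv_uu m)
next
  case (Suc b)
  let ?U = "\<lambda>t. u(m:=t)"
  have eq: "DHc m u a (Suc b) = DHc m u (Suc a) b
      + ((real (Suc m) - real a) * (if a = m then 1 else 0) * uu (Suc m) (?U (u m)) (Suc b)
         + (if Suc b = m then 1 else 0) * ((real (Suc m) - real a) * uu (Suc m) (?U (u m)) a))
      - ((real (Suc m) - real b) * (if b = m then 1 else 0) * uu (Suc m) (?U (u m)) (Suc a)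
         + (if Suc a = m then 1 else 0) * ((real (Suc m) - real b) * uu (Suc m) (?U (u m)) b))"
    unfolding DHc_Suc[OF m, of u a b] fun_upd_triv by (simp add: algebra_simps)
  show ?case unfolding HH.simps eq
    by (intro DERIV_diff DERIV_add DERIV_mult DERIV_cmult deriv_uu m Suc.IH)
qed


lemma ucv_nat: "ucv n u (int k) = uu n u k"
  unfolding ucv_def uu_def by auto

lemma eta_id:
  assumes m: "0 < m" and a: "a \<le> m" and b: "b \<le> m"
  shows "eta (Suc m) u (Suc a) (Suc b) =
    4 * ((real (Suc m) - real a) * (real (Suc m) - real b) * (if a = m then 1 else 0) * uu (Suc m) u b
       + (if b = m then 1 else 0) * ((real (Suc m) - real a) * (real (Suc m) - real b) * uu (Suc m) u a)
       - DHc m u a b)"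
proof (cases "m \<le> a + b")
  case False
  then have "\<not> (int (Suc a) + int (Suc b) - int (Suc m) - 1 \<ge> 0)" by simp
  then have "ucv (Suc m) u (int (Suc a) + int (Suc b) - int (Suc m) - 1) = 0"
    unfolding ucv_def by auto
  then show ?thesis using False by (auto simp: eta_def DHc_def)
next
  case True
  define V where "V = uu (Suc m) u (a + b - m)"
  have iv: "int (Suc a) + int (Suc b) - int (Suc m) - 1 = int (a + b - m)" using True by simp
  have uc: "ucv (Suc m) u (int (a + b - m)) = V"
    unfolding V_def ucv_nat ..
  have e1: "a = m \<Longrightarrow> uu (Suc m) u b = V"
    unfolding V_def by auto
  have e2: "b = m \<Longrightarrow> uu (Suc m) u a = V"
    unfolding V_def by auto
  have e3: "DHc m u a b = V * ((if max a b \<le> m then 1 else 0) - (if m < min a b then 1 else 0)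
      + (real m + real m + 1 - real a - real b) *
        ((if m \<le> min a b then 1 else 0) - (if max a b < m then 1 else 0)))"
    unfolding DHc_def V_def using True by simp
  show ?thesis
    unfolding eta_def iv uc e3
    using a b m e1 e2 apply (auto simp: max_def min_def algebra_simps)
    done
qed

lemma deriv_G0:
  assumes m: "0 < m" and i: "i \<in> {1..Suc m}" and j: "j \<in> {1..Suc m}"
  shows "((\<lambda>t. G0 (Suc m) i j (u(m:=t))) has_real_derivative eta (Suc m) u i j) (at (u m))"
proof -
  obtain a where ia: "i = Suc a" and a: "a \<le> m" using i by (cases i) auto
  obtain b where jb: "j = Suc b" and b: "b \<le> m" using j by (cases j) auto
  have G: "G0 (Suc m) i j v = 4 * ((real (Suc m) - real a) * (real (Suc m) - real b) * uu (Suc m) v a * uu (Suc m) v b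
      - HH (Suc m) v a b)" for v
    unfolding G0_def ia jb by simp
  have eq: "eta (Suc m) u i j =
    4 * ((real (Suc m) - real a) * (real (Suc m) - real b) * (if a = m then 1 else 0) * uu (Suc m) (u(m := u m)) b
       + (if b = m then 1 else 0) * ((real (Suc m) - real a) * (real (Suc m) - real b) * uu (Suc m) (u(m := u m)) a)
       - DHc m u a b)"
    unfolding ia jb fun_upd_triv by (rule eta_id[OF m a b])
  show ?thesis unfolding G eq
    by (intro DERIV_cmult DERIV_diff DERIV_mult deriv_uu m deriv_HH)
qed


lemma mp_local: "mpoly_fun n F \<Longrightarrow> (\<forall>k\<in>{1..n}. u k = v k) \<Longrightarrow> F u = F v"
  by (induction rule: mpoly_fun.induct) auto

lemma mp_line: "mpoly_fun n F \<Longrightarrow> \<exists>q. \<forall>t. F (\<lambda>k. c k + t * v k) = poly q t"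
proof (induction rule: mpoly_fun.induct)
  case (const c0)
  show ?case by (rule exI[of _ "[:c0:]"]) simp
next
  case (var k)
  show ?case by (rule exI[of _ "[:c k, v k:]"]) (simp add: algebra_simps)
next
  case (add f g)
  then obtain q1 q2 where "\<forall>t. f (\<lambda>k. c k + t * v k) = poly q1 t" "\<forall>t. g (\<lambda>k. c k + t * v k) = poly q2 t"
    by blast
  then show ?case by (intro exI[of _ "q1 + q2"]) simp
next
  case (mult f g)
  then obtain q1 q2 where "\<forall>t. f (\<lambda>k. c k + t * v k) = poly q1 t" "\<forall>t. g (\<lambda>k. c k + t * v k) = poly q2 t"
    by blast
  then show ?case by (intro exI[of _ "q1 * q2"]) simp
qed

lemma poly_eventually_zero:
  fixes q :: "real poly"
  assumes ev: "eventually (\<lambda>t. poly q t = 0) (at 0)"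
  shows "q = 0"
proof (rule ccontr)
  assume q: "q \<noteq> 0"
  from ev obtain d where d: "d > 0" and H: "\<forall>x. x \<noteq> 0 \<and> dist x 0 < d \<longrightarrow> poly q x = 0"
    unfolding eventually_at by auto
  have "{0<..<d} \<subseteq> {x. poly q x = 0}" using H by (auto simp: dist_real_def)
  moreover have "finite {x. poly q x = 0}" using q by (rule poly_roots_finite)
  ultimately have "finite {0<..<d}" by (rule finite_subset)
  then show False using infinite_Ioo[of 0 d] d by blast
qed

lemma vieta:
  assumes f: "finite N"
  shows "(\<Prod>s\<in>N. z - r s) = (\<Sum>k\<in>{0..card N}. (-1)^k * esym N r k * z^(card N - k))"
proof -
  have "(\<Prod>s\<in>N. z - r s) = (\<Prod>s\<in>N. (- r s) + z)" by simp
  also have "\<dots> = (\<Sum>B\<in>Pow N. (\<Prod>s\<in>B. - r s) * (\<Prod>s\<in>N - B. z))"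
    by (rule prod_add[OF f])
  also have "\<dots> = (\<Sum>B\<in>Pow N. (-1)^card B * (\<Prod>s\<in>B. r s) * z^(card N - card B))"
  proof (rule sum.cong[OF refl])
    fix B assume B: "B \<in> Pow N"
    then have fB: "finite B" using f finite_subset by auto
    have "(\<Prod>s\<in>B. - r s) = (-1)^card B * (\<Prod>s\<in>B. r s)"
      using prod.distrib[of "\<lambda>_. -1::real" r B] by simp
    moreover have "(\<Prod>s\<in>N - B. z) = z^(card N - card B)"
      using B f by (simp add: card_Diff_subset fB)
    ultimately show "(\<Prod>s\<in>B. - r s) * (\<Prod>s\<in>N - B. z) = (-1)^card B * (\<Prod>s\<in>B. r s) * z^(card N - card B)"
      by simp
  qed
  also have "\<dots> = (\<Sum>k\<in>{0..card N}. \<Sum>B\<in>{B \<in> Pow N. card B = k}. (-1)^card B * (\<Prod>s\<in>B. r s) * z^(card N - card B))"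
    by (rule sum.group[symmetric]) (use f card_mono in auto)
  also have "\<dots> = (\<Sum>k\<in>{0..card N}. (-1)^k * esym N r k * z^(card N - k))"
  proof (rule sum.cong[OF refl])
    fix k
    have "(\<Sum>B\<in>{B \<in> Pow N. card B = k}. (-1)^card B * (\<Prod>s\<in>B. r s) * z^(card N - card B))
        = (\<Sum>B\<in>{B. B \<subseteq> N \<and> card B = k}. (-1)^k * z^(card N - k) * (\<Prod>s\<in>B. r s))"
      by (rule sum.cong) auto
    also have "\<dots> = (-1)^k * esym N r k * z^(card N - k)"
      unfolding esym_def by (simp add: sum_distrib_left sum_distrib_right mult_ac)
    finally show "(\<Sum>B\<in>{B \<in> Pow N. card B = k}. (-1)^card B * (\<Prod>s\<in>B. r s) * z^(card N - card B))
        = (-1)^k * esym N r k * z^(card N - k)" .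
  qed
  finally show ?thesis .
qed

lemma coeffs_zero:
  fixes c :: "nat \<Rightarrow> real"
  assumes R: "\<forall>z\<in>R. (\<Sum>k\<in>{1..n}. c k * z^(n-k)) = 0" and fR: "finite R" and cR: "n \<le> card R"
  shows "\<forall>k\<in>{1..n}. c k = 0"
proof -
  define q where "q = (\<Sum>k\<in>{1..n}. monom (c k) (n-k))"
  have pq: "poly q z = (\<Sum>k\<in>{1..n}. c k * z^(n-k))" for z
    unfolding q_def by (simp add: poly_sum poly_monom)
  have q0: "q = 0"
  proof (rule ccontr)
    assume q: "q \<noteq> 0"
    have dq: "degree q \<le> n - 1"
      unfolding q_def by (rule degree_sum_le) (auto intro: order.trans[OF degree_monom_le])
    have "R \<subseteq> {x. poly q x = 0}" using R pq by auto
    then have "card R \<le> card {x. poly q x = 0}"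
      using poly_roots_finite[OF q] by (rule card_mono[rotated])
    also have "\<dots> \<le> degree q" by (rule card_poly_roots_bound[OF q])
    finally have "card R \<le> n - 1" using dq by simp
    moreover have "n \<noteq> 0"
    proof
      assume "n = 0"
      then have "q = 0" unfolding q_def by simp
      then show False using q by simp
    qed
    ultimately show False using cR by simp
  qed
  show ?thesis
  proof
    fix k assume k: "k \<in> {1..n}"
    have "coeff q (n - k) = (\<Sum>k'\<in>{1..n}. if n - k' = n - k then c k' else 0)"
      unfolding q_def coeff_sum coeff_monom by (rule sum.cong) auto
    also have "\<dots> = (\<Sum>k'\<in>{1..n}. if k' = k then c k' else 0)"
      by (rule sum.cong[OF refl]) (use k in auto)
    also have "\<dots> = c k" using k by simp
    finally show "c k = 0" using q0 by simp
  qed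
qed


lemma neg1_sq: "(-1::real)^k * (-1)^k = 1"
  by (induction k) auto

lemma sign_prod:
  assumes j: "j \<le> n"
  shows "0 < (-1)^(n-j) * (\<Prod>s\<in>{1..n}. (real j + 1/2) - real s)"
proof -
  let ?z = "real j + 1/2"
  have N: "{1..n} = {1..j} \<union> {Suc j..n}" using j by auto
  have "(\<Prod>s\<in>{1..n}. ?z - real s) = (\<Prod>s\<in>{1..j}. ?z - real s) * (\<Prod>s\<in>{Suc j..n}. ?z - real s)"
    unfolding N by (rule prod.union_disjoint) auto
  also have "(\<Prod>s\<in>{Suc j..n}. ?z - real s) = (\<Prod>s\<in>{Suc j..n}. (-1) * (real s - ?z))"
    by (rule prod.cong) auto
  also have "\<dots> = (\<Prod>s\<in>{Suc j..n}. (-1::real)) * (\<Prod>s\<in>{Suc j..n}. real s - ?z)"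
    by (rule prod.distrib)
  also have "(\<Prod>s\<in>{Suc j..n}. (-1::real)) = (-1)^(n-j)" by simp
  finally have e: "(\<Prod>s\<in>{1..n}. ?z - real s) = (-1)^(n-j) * ((\<Prod>s\<in>{1..j}. ?z - real s) * (\<Prod>s\<in>{Suc j..n}. real s - ?z))"
    by simp
  have A: "0 < (\<Prod>s\<in>{1..j}. ?z - real s)" by (rule prod_pos) auto
  have B: "0 < (\<Prod>s\<in>{Suc j..n}. real s - ?z)" by (rule prod_pos) auto
  show ?thesis unfolding e mult.assoc[symmetric] neg1_sq using A B by simp
qed

lemma open_image:
  assumes n: "1 \<le> n"
  shows "eventually (\<lambda>t. \<exists>p. (\<forall>s\<in>{1..n}. p s \<noteq> 0) \<and>
            (\<forall>k\<in>{1..n}. usym n p k = esym {1..n} real k + t * v k)) (at 0)"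
proof -
  let ?N = "{1..n::nat}"
  define c where "c k = esym ?N real k" for k
  define vv where "vv k = (if k = 0 then 0 else v k)" for k
  define F where "F t y = (\<Sum>k\<in>{0..n}. (-1)^k * (c k + t * vv k) * y^(n-k))" for t y :: real
  define z where "z j = real j + 1/2" for j
  have cardN: "card ?N = n" by simp
  have F0: "F 0 y = (\<Prod>s\<in>?N. y - real s)" for y
    unfolding F_def c_def vieta[OF finite_atLeastAtMost, of y real] cardN by simp
  have sgn0: "0 < (-1)^(n-j) * F 0 (z j)" if "j \<in> {0..n}" for j
    unfolding F0 z_def using sign_prod[of j n] that by simp
  have contF: "isCont (\<lambda>t. F t y) x" for x y
    unfolding F_def by (intro continuous_intros)
  have contF2: "isCont (F t) y" for t y
    unfolding F_def by (intro continuous_intros)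
  have ev: "\<forall>j\<in>{0..n}. eventually (\<lambda>t. 0 < (-1)^(n-j) * F t (z j)) (at 0)"
  proof
    fix j assume j: "j \<in> {0..n}"
    have "(\<lambda>t. F t (z j)) \<midarrow>0\<rightarrow> F 0 (z j)"
      using contF[of 0 "z j"] by (simp add: isCont_def)
    then have "(\<lambda>t. (-1)^(n-j) * F t (z j)) \<midarrow>0\<rightarrow> (-1)^(n-j) * F 0 (z j)"
      by (intro tendsto_mult tendsto_const)
    then show "eventually (\<lambda>t. 0 < (-1)^(n-j) * F t (z j)) (at 0)"
      using sgn0[OF j] by (rule order_tendstoD(1))
  qed
  have "eventually (\<lambda>t. \<forall>j\<in>{0..n}. 0 < (-1)^(n-j) * F t (z j)) (at 0)"
    by (rule eventually_ball_finite) (use ev in auto)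
  then show ?thesis
  proof (rule eventually_mono)
    fix t assume pos: "\<forall>j\<in>{0..n}. 0 < (-1)^(n-j) * F t (z j)"
    have roots: "\<exists>r. real s - 1/2 < r \<and> r < real s + 1/2 \<and> F t r = 0" if s: "s \<in> ?N" for s
    proof -
      obtain j where sj: "s = Suc j" and j: "j < n" using s by (cases s) auto
      have p1: "0 < (-1)^(n-j) * F t (z j)" using pos j by auto
      have p2: "0 < (-1)^(n - Suc j) * F t (z (Suc j))" using pos j by auto
      have nj: "n - j = Suc (n - Suc j)" using j by simp
      define e where "e = (-1::real)^(n - Suc j)"
      have p1': "0 < - e * F t (z j)" using p1 unfolding nj e_def by simp
      have p2': "0 < e * F t (z (Suc j))" using p2 unfolding e_def by simp
      have "0 < (- e * F t (z j)) * (e * F t (z (Suc j)))" using p1' p2' by (rule mult_pos_pos)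
      also have "(- e * F t (z j)) * (e * F t (z (Suc j))) = - (e * e) * (F t (z j) * F t (z (Suc j)))"
        by (simp add: algebra_simps)
      also have "e * e = 1" unfolding e_def by (rule neg1_sq)
      finally have neg: "F t (z j) * F t (z (Suc j)) < 0" by simp
      have zz: "z j \<le> z (Suc j)" unfolding z_def by simp
      obtain x where x: "z j \<le> x" "x \<le> z (Suc j)" "F t x = 0"
      proof (cases "F t (z j) < 0")
        case True
        then have "0 < F t (z (Suc j))" using neg by (simp add: mult_less_0_iff)
        then show ?thesis using IVT[of "F t" "z j" 0 "z (Suc j)"] True zz contF2 that by force
      next
        case False
        then have "F t (z (Suc j)) < 0" using neg by (simp add: mult_less_0_iff)
        then show ?thesis using IVT2[of "F t" "z (Suc j)" 0 "z j"] False zz contF2 that by force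
      qed
      have "x \<noteq> z j" "x \<noteq> z (Suc j)" using x(3) neg by auto
      then have "z j < x" "x < z (Suc j)" using x by auto
      then show ?thesis using x(3) unfolding z_def sj by (intro exI[of _ x]) auto
    qed
    then obtain r where r: "\<forall>s\<in>?N. real s - 1/2 < r s \<and> r s < real s + 1/2 \<and> F t (r s) = 0"
      by metis
    have rpos: "0 < r s" if "s \<in> ?N" for s using r that by force
    have inj: "inj_on r ?N"
    proof (rule inj_onI)
      fix s1 s2 assume s1: "s1 \<in> ?N" and s2: "s2 \<in> ?N" and eq: "r s1 = r s2"
      have h1: "real s1 - 1/2 < r s1 \<and> r s1 < real s1 + 1/2" using r s1 by blast
      have h2: "real s2 - 1/2 < r s2 \<and> r s2 < real s2 + 1/2" using r s2 by blast
      have "real s1 < real s2 + 1" "real s2 < real s1 + 1" using h1 h2 eq by linarith+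
      then show "s1 = s2" by linarith
    qed
    define p where "p s = sqrt (r s)" for s
    have pnz: "\<forall>s\<in>?N. p s \<noteq> 0" unfolding p_def using rpos by (metis real_sqrt_eq_zero_cancel_iff less_irrefl)
    have usy: "usym n p k = esym ?N r k" for k
      unfolding usym_esym p_def
    proof (rule esym_cong)
      fix i assume i: "i \<in> ?N"
      have "0 \<le> r i" using rpos[OF i] by simp
      then show "(sqrt (r i))^2 = r i" by simp
    qed
    have R: "\<forall>y\<in>r ` ?N. (\<Sum>k\<in>{1..n}. ((-1)^k * (c k + t * vv k - esym ?N r k)) * y^(n-k)) = 0"
    proof
      fix y assume y: "y \<in> r ` ?N"
      have Fy: "F t y = 0" using y r by auto
      have Py: "(\<Prod>s\<in>?N. y - r s) = 0" using y by (auto intro: prod_zero)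
      have "(\<Sum>k\<in>{0..n}. ((-1)^k * (c k + t * vv k - esym ?N r k)) * y^(n-k)) = F t y - (\<Prod>s\<in>?N. y - r s)"
        unfolding F_def vieta[OF finite_atLeastAtMost, of y r] cardN
        by (simp add: sum_subtractf[symmetric] algebra_simps)
      also have "\<dots> = 0" using Fy Py by simp
      finally have S0: "(\<Sum>k\<in>{0..n}. ((-1)^k * (c k + t * vv k - esym ?N r k)) * y^(n-k)) = 0" .
      have k0: "((-1)^0 * (c 0 + t * vv 0 - esym ?N r 0)) * y^(n-0) = 0"
        unfolding c_def vv_def by (simp add: esym_0)
      show "(\<Sum>k\<in>{1..n}. ((-1)^k * (c k + t * vv k - esym ?N r k)) * y^(n-k)) = 0"
        using S0 unfolding sum.atLeast_Suc_atMost[OF le0] k0 by simp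
    qed
    have co: "\<forall>k\<in>{1..n}. (-1)^k * (c k + t * vv k - esym ?N r k) = 0"
      by (rule coeffs_zero[OF R]) (use inj in \<open>auto simp: card_image\<close>)
    show "\<exists>p. (\<forall>s\<in>?N. p s \<noteq> 0) \<and> (\<forall>k\<in>?N. usym n p k = esym ?N real k + t * v k)"
    proof (intro exI conjI ballI)
      show "\<And>s. s \<in> ?N \<Longrightarrow> p s \<noteq> 0" using pnz by auto
      fix k assume k: "k \<in> ?N"
      then have "c k + t * vv k - esym ?N r k = 0" using co by auto
      then show "usym n p k = esym ?N real k + t * v k"
        using k unfolding usy c_def vv_def by auto
    qed
  qed
qed

lemma mp_unique:
  assumes n: "1 \<le> n" and F: "mpoly_fun n F"
    and V: "\<forall>p. (\<forall>s\<in>{1..n}. p s \<noteq> 0) \<longrightarrow> F (usym n p) = 0"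
  shows "F u = 0"
proof -
  define c where "c k = esym {1..n} real k" for k
  define v where "v k = u k - c k" for k
  obtain q where q: "\<forall>t. F (\<lambda>k. c k + t * v k) = poly q t"
    using mp_line[OF F] by blast
  have "eventually (\<lambda>t. poly q t = 0) (at 0)"
    using open_image[OF n, of v]
  proof (rule eventually_mono)
    fix t assume "\<exists>p. (\<forall>s\<in>{1..n}. p s \<noteq> 0) \<and> (\<forall>k\<in>{1..n}. usym n p k = esym {1..n} real k + t * v k)"
    then obtain p where p: "\<forall>s\<in>{1..n}. p s \<noteq> 0" "\<forall>k\<in>{1..n}. usym n p k = esym {1..n} real k + t * v k"
      by blast
    have "F (\<lambda>k. c k + t * v k) = F (usym n p)"
      by (rule mp_local[OF F]) (use p(2) in \<open>auto simp: c_def\<close>)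
    also have "\<dots> = 0" using V p(1) by blast
    finally show "poly q t = 0" using q by simp
  qed
  then have "q = 0" by (rule poly_eventually_zero)
  then have "F (\<lambda>k. c k + v k) = 0" using q[rule_format, of 1] by simp
  moreover have "(\<lambda>k. c k + v k) = u" unfolding v_def by auto
  ultimately show ?thesis by simp
qed


lemma det_anti:
  fixes A :: "real mat"
  assumes A: "A \<in> carrier_mat n n"
    and z: "\<forall>a b. a < n \<longrightarrow> b < n \<longrightarrow> a + b < n - 1 \<longrightarrow> A $$ (a,b) = 0"
    and d: "\<forall>a<n. A $$ (a, n - 1 - a) \<noteq> 0"
  shows "det A \<noteq> 0"
proof -
  define P :: "real mat" where "P = mat n n (\<lambda>(i,j). if i + j = n - 1 then 1 else 0)"
  have P: "P \<in> carrier_mat n n" by (simp add: P_def)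
  have AP: "(A * P) $$ (a,b) = A $$ (a, n - 1 - b)" if a: "a < n" and b: "b < n" for a b
  proof -
    have "(A * P) $$ (a,b) = (\<Sum>k\<in>{0..<n}. A $$ (a,k) * P $$ (k,b))"
      using A P a b by (simp add: scalar_prod_def)
    also have "\<dots> = (\<Sum>k\<in>{0..<n}. if k = n - 1 - b then A $$ (a,k) else 0)"
      by (rule sum.cong) (use b in \<open>auto simp: P_def\<close>)
    also have "\<dots> = A $$ (a, n-1-b)" using b by simp
    finally show ?thesis .
  qed
  define T where "T = transpose_mat (A * P)"
  have AP': "A * P \<in> carrier_mat n n" using A P by simp
  have T: "T \<in> carrier_mat n n" using AP' by (simp add: T_def)
  have Tij: "T $$ (a,b) = A $$ (b, n - 1 - a)" if "a < n" "b < n" for a b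
  proof -
    have "T $$ (a,b) = (A * P) $$ (b,a)" unfolding T_def using that AP' by (simp del: index_mult_mat)
    also have "\<dots> = A $$ (b, n - 1 - a)" by (rule AP) (use that in auto)
    finally show ?thesis .
  qed
  have ut: "upper_triangular T"
    unfolding upper_triangular_def
  proof (intro allI impI)
    fix a b assume a: "a < dim_row T" and b: "b < a"
    have an: "a < n" using a T by simp
    then show "T $$ (a, b) = 0" unfolding Tij[OF an order.strict_trans[OF b an]]
      using z b an by auto
  qed
  have "det T = prod_list (diag_mat T)" by (rule det_upper_triangular[OF ut T])
  also have "\<dots> \<noteq> 0"
  proof -
    have "0 \<notin> set (diag_mat T)"
      using T d by (auto simp: diag_mat_def Tij)
    then show ?thesis by (simp add: prod_list_zero_iff)
  qed
  finally have "det T \<noteq> 0" .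
  then have "det (A * P) \<noteq> 0" unfolding T_def using det_transpose[OF AP'] by simp
  then show ?thesis using det_mult[OF A P] by auto
qed

theorem mainTheorem8:
  fixes n :: nat
  assumes "n \<ge> 2"
  shows
    "(\<exists>G. \<forall>i\<in>{1..n}. \<forall>j\<in>{1..n}. mpoly_fun n (G i j) \<and>
        (\<forall>p. (\<forall>s\<in>{1..n}. p s \<noteq> 0) \<longrightarrow> gform n i j p = G i j (usym n p)))
     \<and> (\<forall>i\<in>{1..n}. \<forall>j\<in>{1..n}. \<forall>G. mpoly_fun n G \<longrightarrow>
          (\<forall>p. (\<forall>s\<in>{1..n}. p s \<noteq> 0) \<longrightarrow> gform n i j p = G (usym n p)) \<longrightarrow>
          (\<forall>u. ((\<lambda>t. G (u(n - 1 := t))) has_real_derivative eta n u i j) (at (u (n - 1)))))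
     \<and> (\<forall>u. (\<forall>i\<in>{1..n}. \<forall>j\<in>{1..n}. \<forall>i'\<in>{1..n}. \<forall>j'\<in>{1..n}.
               i + j = i' + j' \<longrightarrow> eta n u i j = eta n u i' j')
           \<and> (\<forall>i\<in>{1..n}. \<forall>j\<in>{1..n}. i + j < n + 1 \<longrightarrow> eta n u i j = 0)
           \<and> (\<forall>i\<in>{1..n}. eta n u i (n - i + 1) = 4 * (real n - 1))
           \<and> det (mat n n (\<lambda>(a, b). eta n u (a + 1) (b + 1))) \<noteq> 0)"
proof -
  have n1: "1 \<le> n" using assms by simp
  obtain m where nm: "n = Suc m" and m: "0 < m" using assms by (cases n) auto
  have P1: "\<exists>G. \<forall>i\<in>{1..n}. \<forall>j\<in>{1..n}. mpoly_fun n (G i j) \<and>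
        (\<forall>p. (\<forall>s\<in>{1..n}. p s \<noteq> 0) \<longrightarrow> gform n i j p = G i j (usym n p))"
    by (rule exI[of _ "G0 n"]) (auto simp: mp_G0 gform_G0)
  have P2: "\<forall>i\<in>{1..n}. \<forall>j\<in>{1..n}. \<forall>G. mpoly_fun n G \<longrightarrow>
          (\<forall>p. (\<forall>s\<in>{1..n}. p s \<noteq> 0) \<longrightarrow> gform n i j p = G (usym n p)) \<longrightarrow>
          (\<forall>u. ((\<lambda>t. G (u(n - 1 := t))) has_real_derivative eta n u i j) (at (u (n - 1))))"
  proof (intro ballI allI impI)
    fix i j G u
    assume i: "i \<in> {1..n}" and j: "j \<in> {1..n}" and G: "mpoly_fun n G"
      and rep: "\<forall>p. (\<forall>s\<in>{1..n}. p s \<noteq> 0) \<longrightarrow> gform n i j p = G (usym n p)"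
    have GG: "G v = G0 n i j v" for v
    proof -
      have M: "mpoly_fun n (\<lambda>u. G u - G0 n i j u)" by (intro mp_diff G mp_G0)
      have V: "\<forall>p. (\<forall>s\<in>{1..n}. p s \<noteq> 0) \<longrightarrow> (\<lambda>u. G u - G0 n i j u) (usym n p) = 0"
          using rep gform_G0[OF i j] by auto
      have "(\<lambda>u. G u - G0 n i j u) v = 0" by (rule mp_unique[OF n1 M V])
      then show ?thesis by simp
    qed
    have "((\<lambda>t. G0 (Suc m) i j (u(m := t))) has_real_derivative eta (Suc m) u i j) (at (u m))"
      by (rule deriv_G0[OF m]) (use i j nm in auto)
    then show "((\<lambda>t. G (u(n - 1 := t))) has_real_derivative eta n u i j) (at (u (n - 1)))"
      unfolding GG nm by simp
  qed
  have P3: "(\<forall>i\<in>{1..n}. \<forall>j\<in>{1..n}. \<forall>i'\<in>{1..n}. \<forall>j'\<in>{1..n}.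
               i + j = i' + j' \<longrightarrow> eta n u i j = eta n u i' j')
           \<and> (\<forall>i\<in>{1..n}. \<forall>j\<in>{1..n}. i + j < n + 1 \<longrightarrow> eta n u i j = 0)
           \<and> (\<forall>i\<in>{1..n}. eta n u i (n - i + 1) = 4 * (real n - 1))
           \<and> det (mat n n (\<lambda>(a, b). eta n u (a + 1) (b + 1))) \<noteq> 0" for u
  proof -
    have H: "eta n u i j = eta n u i' j'" if "i + j = i' + j'" for i j i' j'
    proof -
      have h1: "real i + real j = real i' + real j'" using that by (metis of_nat_add)
      have h2: "int i + int j = int i' + int j'" using that by (metis of_nat_add)
      have e1: "2 * real n - real i - real j = 2 * real n - real i' - real j'" using h1 by linarith
      have e2: "int i + int j - int n - 1 = int i' + int j' - int n - 1" using h2 by linarith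
      show ?thesis unfolding eta_def e1 e2 ..
    qed
    have Z: "eta n u i j = 0" if "i + j < n + 1" for i j
    proof -
      have "int i + int j - int n - 1 < 0" using that by linarith
      then have "ucv n u (int i + int j - int n - 1) = 0" unfolding ucv_def by auto
      then show ?thesis unfolding eta_def by simp
    qed
    have AD: "eta n u i (n - i + 1) = 4 * (real n - 1)" if i: "i \<in> {1..n}" for i
    proof -
      have e0: "int i + int (n - i + 1) - int n - 1 = 0" using i by auto
      have e1: "2 * real n - real i - real (n - i + 1) = real n - 1" using i by (auto simp: of_nat_diff)
      show ?thesis unfolding eta_def e0 e1 by (simp add: ucv_def)
    qed
    have D: "det (mat n n (\<lambda>(a, b). eta n u (a + 1) (b + 1))) \<noteq> 0"
    proof (rule det_anti)
      show "mat n n (\<lambda>(a, b). eta n u (a + 1) (b + 1)) \<in> carrier_mat n n" by simp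
      show "\<forall>a b. a < n \<longrightarrow> b < n \<longrightarrow> a + b < n - 1 \<longrightarrow> mat n n (\<lambda>(a, b). eta n u (a + 1) (b + 1)) $$ (a, b) = 0"
        using Z by auto
      show "\<forall>a<n. mat n n (\<lambda>(a, b). eta n u (a + 1) (b + 1)) $$ (a, n - 1 - a) \<noteq> 0"
      proof (intro allI impI)
        fix a assume a: "a < n"
        have "n - 1 - a + 1 = n - (a + 1) + 1" using a by simp
        then have "mat n n (\<lambda>(a, b). eta n u (a + 1) (b + 1)) $$ (a, n - 1 - a) = 4 * (real n - 1)"
          using a AD[of "a + 1"] by simp
        then show "mat n n (\<lambda>(a, b). eta n u (a + 1) (b + 1)) $$ (a, n - 1 - a) \<noteq> 0"
          using assms by simp
      qed
    qed
    show ?thesis using H Z AD D by blast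
  qed
  show ?thesis using P1 P2 P3 by blast
qed

end
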